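(* Let $r\ge1$ and let $\mathcal R_{2r\times 2r}$ be the grid graph with vertex set $\{0,1,\dots,2r-1\}^2\subset\mathbf{Z}^2$ and edges between vertices at Euclidean distance $1$. Let $s_i$ denote the edge between $(i,i)$ and $(i+1,i)$, for $i=0,1,\dots,r-1$ (the "step-diagonal" edges). If $G$ is obtained from $\mathcal R_{2r\times 2r}$ by deleting any $k$ of the edges $s_0,\dots,s_{r-1}$ (keeping all vertices), then $2^{r-k}$ divides $m_G$.
   Context: $m_G$ denotes the number of perfect matchings of the graph $G$. *)

theory Defs
  imports Complex_Main
begin

definition grid_vertices :: "nat \<Rightarrow> (nat \<times> nat) set" where
  "grid_vertices n = {0..<n} \<times> {0..<n}"

definition grid_edges :: "nat \<Rightarrow> (nat \<times> nat) set set" where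
  "grid_edges n = {{u, v} | u v. u \<in> grid_vertices n \<and> v \<in> grid_vertices n \<and>
      sqrt ((real (fst u) - real (fst v))^2 + (real (snd u) - real (snd v))^2) = 1}"

definition perfect_matching :: "'a set \<Rightarrow> 'a set set \<Rightarrow> 'a set set \<Rightarrow> bool" where
  "perfect_matching V E M \<longleftrightarrow> M \<subseteq> E \<and> (\<forall>v\<in>V. \<exists>!e. e \<in> M \<and> v \<in> e)"

definition num_perfect_matchings :: "'a set \<Rightarrow> 'a set set \<Rightarrow> nat" where
  "num_perfect_matchings V E = card {M. perfect_matching V E M}"

definition step_edge :: "nat \<Rightarrow> (nat \<times> nat) set" where
  "step_edge i = {(i, i), (i + 1, i)}"

end

theory Submission
  imports Defs
begin


definition cov1 :: "'a set set \<Rightarrow> 'a \<Rightarrow> bool" where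
  "cov1 M v \<longleftrightarrow> (\<exists>!e. e \<in> M \<and> v \<in> e)"
definition nocov :: "'a set set \<Rightarrow> 'a \<Rightarrow> bool" where
  "nocov M v \<longleftrightarrow> (\<forall>e\<in>M. v \<notin> e)"
definition Xs :: "'a set \<Rightarrow> 'a set \<Rightarrow> 'a set set \<Rightarrow> 'a set set \<Rightarrow> ('a set set \<times> 'a set set) set" where
  "Xs V D E1 E2 = {(M1,M2). M1 \<subseteq> E1 \<and> M2 \<subseteq> E2 \<and> (\<forall>v\<in>V-D. cov1 M1 v \<and> cov1 M2 v)
     \<and> (\<forall>v\<in>D. (cov1 M1 v \<and> nocov M2 v) \<or> (nocov M1 v \<and> cov1 M2 v))}"
definition wfe :: "'a set \<Rightarrow> 'a set set \<Rightarrow> bool" where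
  "wfe V E \<longleftrightarrow> (\<forall>e\<in>E. \<exists>x y. e = {x,y} \<and> x \<noteq> y \<and> x \<in> V \<and> y \<in> V)"

lemma cov1_nocov: "cov1 M v \<Longrightarrow> nocov M v \<Longrightarrow> False"
  unfolding cov1_def nocov_def by blast
lemma cov1_ins_out: "v \<notin> e \<Longrightarrow> cov1 (insert e N) v \<longleftrightarrow> cov1 N v"
  unfolding cov1_def by auto
lemma cov1_del_out: "v \<notin> e \<Longrightarrow> cov1 (N - {e}) v \<longleftrightarrow> cov1 N v"
  unfolding cov1_def by auto
lemma nocov_ins_out: "v \<notin> e \<Longrightarrow> nocov (insert e N) v \<longleftrightarrow> nocov N v"
  unfolding nocov_def by auto
lemma nocov_del_out: "v \<notin> e \<Longrightarrow> nocov (N - {e}) v \<longleftrightarrow> nocov N v"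
  unfolding nocov_def by auto
lemma cov1_ins_in: "v \<in> e \<Longrightarrow> nocov N v \<Longrightarrow> cov1 (insert e N) v"
  unfolding cov1_def nocov_def by auto
lemma nocov_del_in: "cov1 N v \<Longrightarrow> e \<in> N \<Longrightarrow> v \<in> e \<Longrightarrow> nocov (N - {e}) v"
  unfolding cov1_def nocov_def by auto
lemma cov1_uniq: "cov1 N v \<Longrightarrow> e \<in> N \<Longrightarrow> v \<in> e \<Longrightarrow> f \<in> N \<Longrightarrow> v \<in> f \<Longrightarrow> e = f"
  unfolding cov1_def by auto

lemma Xs_iff: "(M1,M2) \<in> Xs V D E1 E2 \<longleftrightarrow> M1 \<subseteq> E1 \<and> M2 \<subseteq> E2 \<and> (\<forall>v\<in>V-D. cov1 M1 v \<and> cov1 M2 v)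
     \<and> (\<forall>v\<in>D. (cov1 M1 v \<and> nocov M2 v) \<or> (nocov M1 v \<and> cov1 M2 v))"
  unfolding Xs_def by simp

lemma Xs_swap: "(M1,M2) \<in> Xs V D E1 E2 \<longleftrightarrow> (M2,M1) \<in> Xs V D E2 E1"
  unfolding Xs_def by auto

lemma card_swap: "card {x \<in> Xs V D E1 E2. P (fst x) (snd x)} = card {x \<in> Xs V D E2 E1. P (snd x) (fst x)}"
proof -
  have "prod.swap ` {x \<in> Xs V D E1 E2. P (fst x) (snd x)} = {x \<in> Xs V D E2 E1. P (snd x) (fst x)}"
  proof (intro equalityI subsetI)
    fix x assume "x \<in> prod.swap ` {x \<in> Xs V D E1 E2. P (fst x) (snd x)}"
    then obtain a b where "x = (b,a)" "(a,b) \<in> Xs V D E1 E2" "P a b" by auto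
    then have "(b,a) \<in> Xs V D E2 E1" by (metis Xs_swap)
    then show "x \<in> {x \<in> Xs V D E2 E1. P (snd x) (fst x)}" using \<open>x = (b,a)\<close> \<open>P a b\<close> by simp
  next
    fix x assume "x \<in> {x \<in> Xs V D E2 E1. P (snd x) (fst x)}"
    then obtain a b where "x = (b,a)" "(b,a) \<in> Xs V D E2 E1" "P a b" by (cases x) auto
    then have "(a,b) \<in> Xs V D E1 E2" by (metis Xs_swap)
    then have "(a,b) \<in> {x \<in> Xs V D E1 E2. P (fst x) (snd x)}" using \<open>P a b\<close> by simp
    then show "x \<in> prod.swap ` {x \<in> Xs V D E1 E2. P (fst x) (snd x)}" using \<open>x = (b,a)\<close>
      by (metis (no_types, lifting) image_eqI swap_simp)
  qed
  moreover have "card (prod.swap ` {x \<in> Xs V D E1 E2. P (fst x) (snd x)}) = card {x \<in> Xs V D E1 E2. P (fst x) (snd x)}"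
    by (rule card_image) (auto simp: inj_on_def)
  ultimately show ?thesis by simp
qed

lemma peel1_fwd:
  assumes X: "(M1,M2) \<in> Xs V D E1 E2" and eM1: "e \<in> M1"
    and a: "e = {d,u}" "d \<noteq> u" "d \<in> D" "u \<in> V" "u \<notin> D" "D \<subseteq> V"
  shows "(M1 - {e}, M2) \<in> Xs (V-{d}) (insert u (D-{d})) {f\<in>E1. d\<notin>f} {f\<in>E2. d\<notin>f} \<and> nocov (M1 - {e}) u"
proof -
    from X have M1E: "M1 \<subseteq> E1" and M2E: "M2 \<subseteq> E2"
      and nt: "\<forall>v\<in>V-D. cov1 M1 v \<and> cov1 M2 v"
      and tt: "\<forall>v\<in>D. (cov1 M1 v \<and> nocov M2 v) \<or> (nocov M1 v \<and> cov1 M2 v)"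
      unfolding Xs_iff by blast+
    have de: "d \<in> e" "u \<in> e" "\<And>v. v \<in> e \<longleftrightarrow> v = d \<or> v = u" using a(1) by auto
    have "\<not> nocov M1 d" using eM1 de(1) unfolding nocov_def by blast
    then have dM1: "cov1 M1 d" "nocov M2 d"
      using tt a(3) by blast+
    have uM1: "cov1 M1 u" "cov1 M2 u" using nt a(4,5) by blast+
    have ue: "u \<in> e" using a(1) by blast
    have nu: "nocov (M1 - {e}) u"
      using nocov_del_in[OF uM1(1) eM1 ue] .
    have "M1 - {e} \<subseteq> {f\<in>E1. d\<notin>f}"
      using M1E cov1_uniq[OF dM1(1) eM1] de(1) by blast
    moreover have "M2 \<subseteq> {f\<in>E2. d\<notin>f}" using M2E dM1(2) unfolding nocov_def by blast
    moreover have "\<forall>v\<in>(V-{d}) - insert u (D-{d}). cov1 (M1-{e}) v \<and> cov1 M2 v"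
    proof
      fix v assume v: "v \<in> (V-{d}) - insert u (D-{d})"
      then have "v \<notin> e" "v \<in> V - D" using de(3) by auto
      then show "cov1 (M1-{e}) v \<and> cov1 M2 v" using nt by (simp add: cov1_del_out)
    qed
    moreover have "\<forall>v\<in>insert u (D-{d}). (cov1 (M1-{e}) v \<and> nocov M2 v) \<or> (nocov (M1-{e}) v \<and> cov1 M2 v)"
    proof
      fix v assume v: "v \<in> insert u (D-{d})"
      show "(cov1 (M1-{e}) v \<and> nocov M2 v) \<or> (nocov (M1-{e}) v \<and> cov1 M2 v)"
      proof (cases "v = u")
        case True then show ?thesis using nu uM1 by simp
      next
        case False
        then have "v \<notin> e" "v \<in> D" using v de(3) by auto
        then show ?thesis using tt by (simp add: cov1_del_out nocov_del_out)
      qed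
    qed
    ultimately show ?thesis using nu unfolding Xs_iff by blast
qed

lemma peel1_bwd:
  assumes X: "(N1,N2) \<in> Xs (V-{d}) (insert u (D-{d})) {f\<in>E1. d\<notin>f} {f\<in>E2. d\<notin>f}"
      and nu: "nocov N1 u"
    and a: "e \<in> E1" "e = {d,u}" "d \<noteq> u" "d \<in> D" "u \<in> V" "u \<notin> D" "D \<subseteq> V"
  shows "(insert e N1, N2) \<in> Xs V D E1 E2"
proof -
    have de: "d \<in> e" "u \<in> e" "\<And>v. v \<in> e \<longleftrightarrow> v = d \<or> v = u" using a(2) by auto
    from X have N1E: "N1 \<subseteq> {f\<in>E1. d\<notin>f}" and N2E: "N2 \<subseteq> {f\<in>E2. d\<notin>f}"
      and nt: "\<forall>v\<in>(V-{d}) - insert u (D-{d}). cov1 N1 v \<and> cov1 N2 v"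
      and tt: "\<forall>v\<in>insert u (D-{d}). (cov1 N1 v \<and> nocov N2 v) \<or> (nocov N1 v \<and> cov1 N2 v)"
      unfolding Xs_iff by blast+
    have ndN: "nocov N1 d" "nocov N2 d" using N1E N2E unfolding nocov_def by blast+
    have "cov1 N1 u \<or> cov1 N2 u" using tt by blast
    then have nu': "cov1 N2 u" using nu by (metis cov1_nocov)
    have "insert e N1 \<subseteq> E1" using N1E a(1) by blast
    moreover have "N2 \<subseteq> E2" using N2E by blast
    moreover have "\<forall>v\<in>V-D. cov1 (insert e N1) v \<and> cov1 N2 v"
    proof
      fix v assume v: "v \<in> V - D"
      show "cov1 (insert e N1) v \<and> cov1 N2 v"
      proof (cases "v = u")
        case True show ?thesis unfolding True using cov1_ins_in[OF de(2) nu] nu' by simp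
      next
        case False
        then have ve: "v \<notin> e" and vm: "v \<in> (V-{d}) - insert u (D-{d})" using v de(3) a(4) by auto
        from vm nt have "cov1 N1 v \<and> cov1 N2 v" by blast
        then show ?thesis using ve by (simp add: cov1_ins_out)
      qed
    qed
    moreover have "\<forall>v\<in>D. (cov1 (insert e N1) v \<and> nocov N2 v) \<or> (nocov (insert e N1) v \<and> cov1 N2 v)"
    proof
      fix v assume v: "v \<in> D"
      show "(cov1 (insert e N1) v \<and> nocov N2 v) \<or> (nocov (insert e N1) v \<and> cov1 N2 v)"
      proof (cases "v = d")
        case True show ?thesis unfolding True using cov1_ins_in[OF de(1) ndN(1)] ndN(2) by simp
      next
        case False
        then have ve: "v \<notin> e" and vm: "v \<in> insert u (D-{d})" using v de(3) a(6) by auto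
        from vm tt have "(cov1 N1 v \<and> nocov N2 v) \<or> (nocov N1 v \<and> cov1 N2 v)" by blast
        then show ?thesis using ve by (simp add: cov1_ins_out nocov_ins_out)
      qed
    qed
    ultimately show ?thesis unfolding Xs_iff by blast
qed

lemma peel1:
  assumes "e \<in> E1" "e = {d,u}" "d \<noteq> u" "d \<in> D" "u \<in> V" "u \<notin> D" "D \<subseteq> V"
  shows "bij_betw (\<lambda>x. (fst x - {e}, snd x)) {x \<in> Xs V D E1 E2. e \<in> fst x}
     {x \<in> Xs (V-{d}) (insert u (D-{d})) {f\<in>E1. d\<notin>f} {f\<in>E2. d\<notin>f}. nocov (fst x) u}"
  apply (rule bij_betw_byWitness[where f'="\<lambda>x. (insert e (fst x), snd x)"])
  subgoal by auto
  subgoal using assms(2) by (auto simp: Xs_def)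
  subgoal using peel1_fwd[OF _ _ assms(2-)] by force
  subgoal using peel1_bwd[OF _ _ assms] by force
  done

lemma peel2_fwd:
  assumes X: "(M1,M2) \<in> Xs V D E1 E2" and eM1: "e \<in> M1"
    and a: "e = {d,u}" "d \<noteq> u" "d \<in> D" "u \<in> D"
  shows "(M1 - {e}, M2) \<in> Xs (V-{d,u}) (D-{d,u}) {f\<in>E1. d\<notin>f \<and> u\<notin>f} {f\<in>E2. d\<notin>f \<and> u\<notin>f}"
proof -
    have de: "d \<in> e" "u \<in> e" "\<And>v. v \<in> e \<longleftrightarrow> v = d \<or> v = u" using a(1) by auto
    from X have M1E: "M1 \<subseteq> E1" and M2E: "M2 \<subseteq> E2"
      and nt: "\<forall>v\<in>V-D. cov1 M1 v \<and> cov1 M2 v"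
      and tt: "\<forall>v\<in>D. (cov1 M1 v \<and> nocov M2 v) \<or> (nocov M1 v \<and> cov1 M2 v)"
      unfolding Xs_iff by blast+
    have "\<not> nocov M1 d" using eM1 de(1) unfolding nocov_def by blast
    then have dM1: "cov1 M1 d" "nocov M2 d"
      using tt a(3) by blast+
    have "\<not> nocov M1 u" using eM1 de(2) unfolding nocov_def by blast
    then have uM1: "cov1 M1 u" "nocov M2 u"
      using tt a(4) by blast+
    have "M1 - {e} \<subseteq> {f\<in>E1. d\<notin>f \<and> u\<notin>f}"
      using M1E cov1_uniq[OF dM1(1) eM1 de(1)] cov1_uniq[OF uM1(1) eM1 de(2)] by blast
    moreover have "M2 \<subseteq> {f\<in>E2. d\<notin>f \<and> u\<notin>f}" using M2E dM1(2) uM1(2) unfolding nocov_def by blast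
    moreover have "\<forall>v\<in>(V-{d,u}) - (D-{d,u}). cov1 (M1-{e}) v \<and> cov1 M2 v"
    proof
      fix v assume v: "v \<in> (V-{d,u}) - (D-{d,u})"
      then have ve: "v \<notin> e" and vm: "v \<in> V - D" using de(3) by auto
      from vm nt have "cov1 M1 v \<and> cov1 M2 v" by blast
      then show "cov1 (M1-{e}) v \<and> cov1 M2 v" using ve by (simp add: cov1_del_out)
    qed
    moreover have "\<forall>v\<in>D-{d,u}. (cov1 (M1-{e}) v \<and> nocov M2 v) \<or> (nocov (M1-{e}) v \<and> cov1 M2 v)"
    proof
      fix v assume v: "v \<in> D-{d,u}"
      then have ve: "v \<notin> e" and vm: "v \<in> D" using de(3) by auto
      from vm tt have "(cov1 M1 v \<and> nocov M2 v) \<or> (nocov M1 v \<and> cov1 M2 v)" by blast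
      then show "(cov1 (M1-{e}) v \<and> nocov M2 v) \<or> (nocov (M1-{e}) v \<and> cov1 M2 v)"
        using ve by (simp add: cov1_del_out nocov_del_out)
    qed
    ultimately show ?thesis unfolding Xs_iff by blast
qed

lemma peel2_bwd:
  assumes X: "(N1,N2) \<in> Xs (V-{d,u}) (D-{d,u}) {f\<in>E1. d\<notin>f \<and> u\<notin>f} {f\<in>E2. d\<notin>f \<and> u\<notin>f}"
    and a: "e \<in> E1" "e = {d,u}" "d \<noteq> u" "d \<in> D" "u \<in> D"
  shows "(insert e N1, N2) \<in> Xs V D E1 E2"
proof -
    have de: "d \<in> e" "u \<in> e" "\<And>v. v \<in> e \<longleftrightarrow> v = d \<or> v = u" using a(2) by auto
    from X have N1E: "N1 \<subseteq> {f\<in>E1. d\<notin>f \<and> u\<notin>f}" and N2E: "N2 \<subseteq> {f\<in>E2. d\<notin>f \<and> u\<notin>f}"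
      and nt: "\<forall>v\<in>(V-{d,u}) - (D-{d,u}). cov1 N1 v \<and> cov1 N2 v"
      and tt: "\<forall>v\<in>D-{d,u}. (cov1 N1 v \<and> nocov N2 v) \<or> (nocov N1 v \<and> cov1 N2 v)"
      unfolding Xs_iff by blast+
    have ndN: "nocov N1 d" "nocov N2 d" "nocov N1 u" "nocov N2 u"
      using N1E N2E unfolding nocov_def by blast+
    have "insert e N1 \<subseteq> E1" using N1E a(1) by blast
    moreover have "N2 \<subseteq> E2" using N2E by blast
    moreover have "\<forall>v\<in>V-D. cov1 (insert e N1) v \<and> cov1 N2 v"
    proof
      fix v assume v: "v \<in> V - D"
      then have ve: "v \<notin> e" and vm: "v \<in> (V-{d,u}) - (D-{d,u})" using de(3) a(4,5) by auto
      from vm nt have "cov1 N1 v \<and> cov1 N2 v" by blast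
      then show "cov1 (insert e N1) v \<and> cov1 N2 v" using ve by (simp add: cov1_ins_out)
    qed
    moreover have "\<forall>v\<in>D. (cov1 (insert e N1) v \<and> nocov N2 v) \<or> (nocov (insert e N1) v \<and> cov1 N2 v)"
    proof
      fix v assume v: "v \<in> D"
      show "(cov1 (insert e N1) v \<and> nocov N2 v) \<or> (nocov (insert e N1) v \<and> cov1 N2 v)"
      proof (cases "v = d \<or> v = u")
        case True
        then show ?thesis
        proof
          assume vd: "v = d" show ?thesis unfolding vd using cov1_ins_in[OF de(1) ndN(1)] ndN(2) by simp
        next
          assume vd: "v = u" show ?thesis unfolding vd using cov1_ins_in[OF de(2) ndN(3)] ndN(4) by simp
        qed
      next
        case False
        then have ve: "v \<notin> e" and vm: "v \<in> D-{d,u}" using v de(3) by auto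
        from vm tt have "(cov1 N1 v \<and> nocov N2 v) \<or> (nocov N1 v \<and> cov1 N2 v)" by blast
        then show ?thesis using ve by (simp add: cov1_ins_out nocov_ins_out)
      qed
    qed
    ultimately show ?thesis unfolding Xs_iff by blast
qed

lemma peel2:
  assumes "e \<in> E1" "e = {d,u}" "d \<noteq> u" "d \<in> D" "u \<in> D"
  shows "bij_betw (\<lambda>x. (fst x - {e}, snd x)) {x \<in> Xs V D E1 E2. e \<in> fst x}
     (Xs (V-{d,u}) (D-{d,u}) {f\<in>E1. d\<notin>f \<and> u\<notin>f} {f\<in>E2. d\<notin>f \<and> u\<notin>f})"
  apply (rule bij_betw_byWitness[where f'="\<lambda>x. (insert e (fst x), snd x)"])
  subgoal by auto
  subgoal using assms(2) by (auto simp: Xs_def)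
  subgoal using peel2_fwd[OF _ _ assms(2-)] by force
  subgoal using peel2_bwd[OF _ assms] by force
  done


lemma Xs_fst_uniq: "x \<in> Xs V D E1 E2 \<Longrightarrow> d \<in> D \<Longrightarrow> e \<in> fst x \<Longrightarrow> e' \<in> fst x \<Longrightarrow> d \<in> e \<Longrightarrow> d \<in> e' \<Longrightarrow> e = e'"
proof (cases x)
  case (Pair a b)
  assume x: "x \<in> Xs V D E1 E2" "d \<in> D" "e \<in> fst x" "e' \<in> fst x" "d \<in> e" "d \<in> e'"
  have ab: "(a,b) \<in> Xs V D E1 E2" "e \<in> a" "e' \<in> a" using x Pair by auto
  have "\<forall>v\<in>D. (cov1 a v \<and> nocov b v) \<or> (nocov a v \<and> cov1 b v)" using ab(1) unfolding Xs_iff by blast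
  then have "cov1 a d \<or> nocov a d" using x(2) by blast
  moreover have "\<not> nocov a d" using ab(2) x(5) unfolding nocov_def by blast
  ultimately have "cov1 a d" by blast
  then show ?thesis using cov1_uniq[of a d e e'] ab x by blast
qed
lemma Xs_snd_uniq: "x \<in> Xs V D E1 E2 \<Longrightarrow> d \<in> D \<Longrightarrow> e \<in> snd x \<Longrightarrow> e' \<in> snd x \<Longrightarrow> d \<in> e \<Longrightarrow> d \<in> e' \<Longrightarrow> e = e'"
proof (cases x)
  case (Pair a b)
  assume x: "x \<in> Xs V D E1 E2" "d \<in> D" "e \<in> snd x" "e' \<in> snd x" "d \<in> e" "d \<in> e'"
  have ab: "(a,b) \<in> Xs V D E1 E2" "e \<in> b" "e' \<in> b" using x Pair by auto
  have "\<forall>v\<in>D. (cov1 a v \<and> nocov b v) \<or> (nocov a v \<and> cov1 b v)" using ab(1) unfolding Xs_iff by blast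
  then have "cov1 b d \<or> nocov b d" using x(2) by blast
  moreover have "\<not> nocov b d" using ab(2) x(5) unfolding nocov_def by blast
  ultimately have "cov1 b d" by blast
  then show ?thesis using cov1_uniq[of b d e e'] ab x by blast
qed
lemma Xs_sub: "x \<in> Xs V D E1 E2 \<Longrightarrow> fst x \<subseteq> E1 \<and> snd x \<subseteq> E2"
proof (cases x)
  case (Pair a b)
  assume "x \<in> Xs V D E1 E2"
  then have "(a,b) \<in> Xs V D E1 E2" using Pair by simp
  then have "a \<subseteq> E1 \<and> b \<subseteq> E2" unfolding Xs_iff by blast
  then show ?thesis using Pair by simp
qed
lemma Xs_D': "x \<in> Xs V D E1 E2 \<Longrightarrow> u \<in> D \<Longrightarrow> (cov1 (fst x) u \<and> nocov (snd x) u) \<or> (nocov (fst x) u \<and> cov1 (snd x) u)"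
proof (cases x)
  case (Pair a b)
  assume "x \<in> Xs V D E1 E2" "u \<in> D"
  then have "(a,b) \<in> Xs V D E1 E2" using Pair by simp
  then have "(cov1 a u \<and> nocov b u) \<or> (nocov a u \<and> cov1 b u)" using \<open>u \<in> D\<close> unfolding Xs_iff by blast
  then show ?thesis using Pair by simp
qed
lemma Xs_excl: "x \<in> Xs V D E1 E2 \<Longrightarrow> d \<in> D \<Longrightarrow> e \<in> fst x \<Longrightarrow> e' \<in> snd x \<Longrightarrow> d \<in> e \<Longrightarrow> d \<in> e' \<Longrightarrow> False"
proof -
  assume a: "x \<in> Xs V D E1 E2" "d \<in> D" "e \<in> fst x" "e' \<in> snd x" "d \<in> e" "d \<in> e'"
  have "\<not> nocov (fst x) d" "\<not> nocov (snd x) d" using a(3-6) unfolding nocov_def by blast+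
  then show False using Xs_D'[OF a(1,2)] by blast
qed
lemma cov1_ex: "cov1 M v \<Longrightarrow> \<exists>e\<in>M. v \<in> e" unfolding cov1_def by blast
lemma Xs_cover: "x \<in> Xs V D E1 E2 \<Longrightarrow> d \<in> D \<Longrightarrow> (\<exists>e\<in>fst x. d \<in> e) \<or> (\<exists>e\<in>snd x. d \<in> e)"
proof -
  assume a: "x \<in> Xs V D E1 E2" "d \<in> D"
  from Xs_D'[OF a] show ?thesis
  proof (elim disjE conjE)
    assume "cov1 (fst x) d" then show ?thesis using cov1_ex by (intro disjI1)
  next
    assume "cov1 (snd x) d" then show ?thesis using cov1_ex by (intro disjI2)
  qed
qed
lemma Xs_term_split: "x \<in> Xs V D E1 E2 \<Longrightarrow> u \<in> D \<Longrightarrow> (nocov (fst x) u \<and> \<not> nocov (snd x) u) \<or> (\<not> nocov (fst x) u \<and> nocov (snd x) u)"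
proof (cases x)
  case (Pair a b)
  assume "x \<in> Xs V D E1 E2" "u \<in> D"
  then have "(cov1 (fst x) u \<and> nocov (snd x) u) \<or> (nocov (fst x) u \<and> cov1 (snd x) u)" by (rule Xs_D')
  then show ?thesis
  proof (elim disjE conjE)
    assume "cov1 (fst x) u" "nocov (snd x) u"
    then show ?thesis by (meson cov1_nocov)
  next
    assume "nocov (fst x) u" "cov1 (snd x) u"
    then show ?thesis by (meson cov1_nocov)
  qed
qed

lemma wfe_Pow: "wfe V E \<Longrightarrow> E \<subseteq> Pow V"
proof
  fix e assume "wfe V E" "e \<in> E"
  then obtain x y where "e = {x,y}" "x \<in> V" "y \<in> V" unfolding wfe_def by meson
  then show "e \<in> Pow V" by simp
qed

lemma wfe_mono: "wfe V E \<Longrightarrow> E' \<subseteq> E \<Longrightarrow> (\<And>e. e \<in> E' \<Longrightarrow> d \<notin> e) \<Longrightarrow> wfe (V - {d}) E'"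
proof -
  assume a: "wfe V E" "E' \<subseteq> E" "\<And>e. e \<in> E' \<Longrightarrow> d \<notin> e"
  show "wfe (V - {d}) E'" unfolding wfe_def
  proof
    fix e assume e: "e \<in> E'"
    then have "e \<in> E" using a(2) by blast
    then obtain x y where xy: "e = {x,y}" "x \<noteq> y" "x \<in> V" "y \<in> V" using a(1) unfolding wfe_def by meson
    have "d \<notin> e" using a(3) e by blast
    then have "x \<noteq> d" "y \<noteq> d" using xy(1) by auto
    then show "\<exists>x y. e = {x, y} \<and> x \<noteq> y \<and> x \<in> V - {d} \<and> y \<in> V - {d}" using xy by blast
  qed
qed

lemma finite_Xs:
  assumes "finite V" "wfe V (E1 \<union> E2)"
  shows "finite (Xs V D E1 E2)"
proof -
  have "E1 \<union> E2 \<subseteq> Pow V" using wfe_Pow[OF assms(2)] .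
  then have "finite E1" "finite E2" using assms(1) by (meson finite_Pow_iff finite_Un finite_subset)+
  moreover have "Xs V D E1 E2 \<subseteq> Pow E1 \<times> Pow E2" unfolding Xs_def by auto
  ultimately show ?thesis by (meson finite_Pow_iff finite_SigmaI finite_subset)
qed

lemma pow_aux: "(2::nat) ^ (a - c) dvd 2 * 2 ^ (a - 1 - c)"
proof (cases "a - c = 0")
  case True then show ?thesis by simp
next
  case False
  then have "a - c = Suc (a - 1 - c)" by simp
  then show ?thesis by simp
qed

lemma main_abs:
  assumes "finite V" "D \<subseteq> V" "wfe V (E1 \<union> E2)" "C \<subseteq> D" "\<forall>e \<in> (E1 - E2) \<union> (E2 - E1). e \<inter> C \<noteq> {}"
  shows "2 ^ (card D div 2 - card C) dvd card (Xs V D E1 E2)"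
  using assms
proof (induction "card V" arbitrary: V D E1 E2 C rule: less_induct)
  case less
  have finV: "finite V" and DV: "D \<subseteq> V" and wf: "wfe V (E1 \<union> E2)" and CD: "C \<subseteq> D"
    and dl: "\<forall>e \<in> (E1 - E2) \<union> (E2 - E1). e \<inter> C \<noteq> {}" using less.prems by auto
  have finD: "finite D" using finV DV finite_subset by blast
  have finC: "finite C" using finD CD finite_subset by blast
  show ?case
  proof (cases "D \<subseteq> C")
    case True
    then have "card D \<le> card C" using finC card_mono by blast
    then have "card D div 2 - card C = 0" by simp
    then show ?thesis by simp
  next
    case False
    then obtain d where d: "d \<in> D" "d \<notin> C" by blast
    define Ed where "Ed = {e \<in> E1 \<union> E2. d \<in> e}"
    define A1 where "A1 e = {x \<in> Xs V D E1 E2. e \<in> fst x}" for e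
    define A2 where "A2 e = {x \<in> Xs V D E1 E2. e \<in> snd x}" for e
    define t where "t = card D div 2 - card C"
    have EV: "E1 \<union> E2 \<subseteq> Pow V" using wfe_Pow[OF wf] .
    then have finE: "finite (E1 \<union> E2)" using finV by (meson finite_Pow_iff finite_subset)
    then have finEd: "finite Ed" unfolding Ed_def by simp
    have finX: "finite (Xs V D E1 E2)" using finite_Xs[OF finV wf] .
    have XU: "Xs V D E1 E2 = (\<Union>e\<in>Ed. A1 e) \<union> (\<Union>e\<in>Ed. A2 e)"
    proof (intro equalityI subsetI)
      fix x assume x: "x \<in> Xs V D E1 E2"
      from Xs_cover[OF x d(1)] Xs_sub[OF x]
      show "x \<in> (\<Union>e\<in>Ed. A1 e) \<union> (\<Union>e\<in>Ed. A2 e)"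
        unfolding A1_def A2_def Ed_def using x by blast
    next
      fix x assume "x \<in> (\<Union>e\<in>Ed. A1 e) \<union> (\<Union>e\<in>Ed. A2 e)"
      then show "x \<in> Xs V D E1 E2" unfolding A1_def A2_def by blast
    qed
    have c1: "card (\<Union>e\<in>Ed. A1 e) = (\<Sum>e\<in>Ed. card (A1 e))"
    proof (rule card_UN_disjoint[OF finEd])
      show "\<forall>i\<in>Ed. finite (A1 i)" using finX unfolding A1_def by simp
      show "\<forall>i\<in>Ed. \<forall>j\<in>Ed. i \<noteq> j \<longrightarrow> A1 i \<inter> A1 j = {}"
        unfolding A1_def Ed_def using Xs_fst_uniq[OF _ d(1)] by blast
    qed
    have c2: "card (\<Union>e\<in>Ed. A2 e) = (\<Sum>e\<in>Ed. card (A2 e))"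
    proof (rule card_UN_disjoint[OF finEd])
      show "\<forall>i\<in>Ed. finite (A2 i)" using finX unfolding A2_def by simp
      show "\<forall>i\<in>Ed. \<forall>j\<in>Ed. i \<noteq> j \<longrightarrow> A2 i \<inter> A2 j = {}"
        unfolding A2_def Ed_def using Xs_snd_uniq[OF _ d(1)] by blast
    qed
    have c3: "card ((\<Union>e\<in>Ed. A1 e) \<union> (\<Union>e\<in>Ed. A2 e)) = card (\<Union>e\<in>Ed. A1 e) + card (\<Union>e\<in>Ed. A2 e)"
    proof (rule card_Un_disjoint)
      show "finite (\<Union>e\<in>Ed. A1 e)" "finite (\<Union>e\<in>Ed. A2 e)" using finX XU by (metis finite_Un)+
      show "(\<Union>e\<in>Ed. A1 e) \<inter> (\<Union>e\<in>Ed. A2 e) = {}"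
        unfolding A1_def A2_def Ed_def using Xs_excl[OF _ d(1)] by blast
    qed
    have decomp: "card (Xs V D E1 E2) = (\<Sum>e\<in>Ed. card (A1 e) + card (A2 e))"
      using XU c1 c2 c3 by (simp add: sum.distrib)
    have each: "2 ^ t dvd card (A1 e) + card (A2 e)" if eEd: "e \<in> Ed" for e
    proof -
      from eEd have eE: "e \<in> E1 \<union> E2" and de: "d \<in> e" unfolding Ed_def by auto
      from eE wf obtain x y where xy: "e = {x,y}" "x \<noteq> y" "x \<in> V" "y \<in> V" unfolding wfe_def by meson
      obtain u where u: "e = {d,u}" "d \<noteq> u" "u \<in> V"
      proof (cases "x = d")
        case True then show ?thesis using that xy by blast
      next
        case False then have "y = d" using de xy by blast
        then show ?thesis using that[of x] xy by (simp add: insert_commute)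
      qed
      show ?thesis
      proof (cases "u \<in> D")
        case False
        have eboth: "e \<in> E1" "e \<in> E2"
        proof -
          have "e \<inter> C = {}" using u(1) d(2) False CD by blast
          then show "e \<in> E1" "e \<in> E2" using dl eE by blast+
        qed
        define V' where "V' = V - {d}"
        define D' where "D' = insert u (D - {d})"
        define E1' where "E1' = {f\<in>E1. d\<notin>f}"
        define E2' where "E2' = {f\<in>E2. d\<notin>f}"
        have b1: "card (A1 e) = card {x \<in> Xs V' D' E1' E2'. nocov (fst x) u}"
          unfolding A1_def V'_def D'_def E1'_def E2'_def
          by (rule bij_betw_same_card[OF peel1[OF eboth(1) u(1) u(2) d(1) u(3) False DV]])
        have "card (A2 e) = card {x \<in> Xs V D E2 E1. e \<in> fst x}"
          unfolding A2_def using card_swap[of V D E1 E2 "\<lambda>a b. e \<in> b"] by simp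
        also have "\<dots> = card {x \<in> Xs V' D' E2' E1'. nocov (fst x) u}"
          unfolding V'_def D'_def E1'_def E2'_def
          by (rule bij_betw_same_card[OF peel1[OF eboth(2) u(1) u(2) d(1) u(3) False DV]])
        also have "\<dots> = card {x \<in> Xs V' D' E1' E2'. nocov (snd x) u}"
          using card_swap[of V' D' E2' E1' "\<lambda>a b. nocov a u"] by simp
        finally have b2: "card (A2 e) = card {x \<in> Xs V' D' E1' E2'. nocov (snd x) u}" .
        have uD': "u \<in> D'" unfolding D'_def by simp
        have finV': "finite V'" using finV unfolding V'_def by simp
        have wf': "wfe V' (E1' \<union> E2')" unfolding V'_def by (rule wfe_mono[OF wf]) (auto simp: E1'_def E2'_def)
        have finX': "finite (Xs V' D' E1' E2')" using finite_Xs[OF finV' wf'] .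
        have split: "card (Xs V' D' E1' E2') = card {x \<in> Xs V' D' E1' E2'. nocov (fst x) u} + card {x \<in> Xs V' D' E1' E2'. nocov (snd x) u}"
        proof -
          have "Xs V' D' E1' E2' = {x \<in> Xs V' D' E1' E2'. nocov (fst x) u} \<union> {x \<in> Xs V' D' E1' E2'. nocov (snd x) u}"
            using Xs_term_split[OF _ uD'] by blast
          moreover have "{x \<in> Xs V' D' E1' E2'. nocov (fst x) u} \<inter> {x \<in> Xs V' D' E1' E2'. nocov (snd x) u} = {}"
            using Xs_term_split[OF _ uD'] by blast
          ultimately show ?thesis using finX'
            by (metis (no_types, lifting) card_Un_disjoint finite_Un)
        qed
        have cardD': "card D' = card D"
        proof -
          have "card D' = Suc (card (D - {d}))" unfolding D'_def using False finD by simp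
          also have "\<dots> = card D" by (rule card_Suc_Diff1[OF finD d(1)])
          finally show ?thesis .
        qed
        have ih: "2 ^ (card D' div 2 - card C) dvd card (Xs V' D' E1' E2')"
        proof (rule less.hyps)
          show "card V' < card V" unfolding V'_def using d(1) DV finV by (meson card_Diff1_less subsetD)
          show "finite V'" by (rule finV')
          show "D' \<subseteq> V'" unfolding D'_def V'_def using DV u by auto
          show "wfe V' (E1' \<union> E2')" by (rule wf')
          show "C \<subseteq> D'" unfolding D'_def using CD d(2) by auto
          show "\<forall>e \<in> (E1' - E2') \<union> (E2' - E1'). e \<inter> C \<noteq> {}" unfolding E1'_def E2'_def using dl by auto
        qed
        show ?thesis using ih b1 b2 split cardD' unfolding t_def by simp
      next
        case True
        define V' where "V' = V - {d,u}"
        define D' where "D' = D - {d,u}"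
        define C' where "C' = C - {u}"
        define E1' where "E1' = {f\<in>E1. d\<notin>f \<and> u\<notin>f}"
        define E2' where "E2' = {f\<in>E2. d\<notin>f \<and> u\<notin>f}"
        have b1: "card (A1 e) = (if e \<in> E1 then card (Xs V' D' E1' E2') else 0)"
        proof (cases "e \<in> E1")
          case True
          then show ?thesis unfolding A1_def V'_def D'_def E1'_def E2'_def
            using bij_betw_same_card[OF peel2[OF True u(1) u(2) d(1) \<open>u \<in> D\<close>]] by simp
        next
          case False
          then have "A1 e = {}" unfolding A1_def using Xs_sub by blast
          then show ?thesis using False by simp
        qed
        have b2: "card (A2 e) = (if e \<in> E2 then card (Xs V' D' E1' E2') else 0)"
        proof (cases "e \<in> E2")
          case True
          have "card (A2 e) = card {x \<in> Xs V D E2 E1. e \<in> fst x}"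
            unfolding A2_def using card_swap[of V D E1 E2 "\<lambda>a b. e \<in> b"] by simp
          also have "\<dots> = card (Xs V' D' E2' E1')"
            unfolding V'_def D'_def E1'_def E2'_def
            by (rule bij_betw_same_card[OF peel2[OF True u(1) u(2) d(1) \<open>u \<in> D\<close>]])
          also have "\<dots> = card (Xs V' D' E1' E2')"
            using card_swap[of V' D' E2' E1' "\<lambda>a b. True"] by simp
          finally show ?thesis using True by simp
        next
          case False
          then have "A2 e = {}" unfolding A2_def using Xs_sub by blast
          then show ?thesis using False by simp
        qed
        have finV': "finite V'" using finV unfolding V'_def by simp
        have wf0: "wfe (V - {d}) ({f\<in>E1. d\<notin>f} \<union> {f\<in>E2. d\<notin>f})" by (rule wfe_mono[OF wf]) auto
        have "V' = (V - {d}) - {u}" unfolding V'_def by blast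
        then have wf': "wfe V' (E1' \<union> E2')" by (simp only:) (rule wfe_mono[OF wf0], auto simp: E1'_def E2'_def)
        have ih: "2 ^ (card D' div 2 - card C') dvd card (Xs V' D' E1' E2')"
        proof (rule less.hyps)
          have "V' \<subset> V" unfolding V'_def using d(1) DV by blast
          then show "card V' < card V" using finV by (simp add: psubset_card_mono)
          show "finite V'" by (rule finV')
          show "D' \<subseteq> V'" unfolding D'_def V'_def using DV by auto
          show "wfe V' (E1' \<union> E2')" by (rule wf')
          show "C' \<subseteq> D'" unfolding D'_def C'_def using CD d(2) by auto
          show "\<forall>e \<in> (E1' - E2') \<union> (E2' - E1'). e \<inter> C' \<noteq> {}" unfolding E1'_def E2'_def C'_def using dl by auto
        qed
        have cD: "card D' = card D - 2" unfolding D'_def using d(1) True u(2) finD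
          by (simp add: card_Diff_subset)
        have cD2: "card D \<ge> 2"
        proof -
          have "{d,u} \<subseteq> D" using d(1) True by blast
          then have "card {d,u} \<le> card D" using finD card_mono by blast
          then show ?thesis using u(2) by simp
        qed
        have div: "card D' div 2 = card D div 2 - 1"
        proof -
          obtain k where k: "card D = k + 2" using cD2 by (metis add.commute le_Suc_ex)
          then show ?thesis using cD by simp
        qed
        show ?thesis
        proof (cases "u \<in> C")
          case True
          have "card C' = card C - 1" unfolding C'_def using True finC by simp
          moreover have "card C \<ge> 1" using True finC by (metis card_0_eq empty_iff less_one not_le)
          ultimately have "card D' div 2 - card C' = t" unfolding t_def using div by simp
          then have "2 ^ t dvd card (Xs V' D' E1' E2')" using ih by simp
          then show ?thesis using b1 b2 by simp
        next
          case False
          have eboth: "e \<in> E1" "e \<in> E2"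
          proof -
            have "e \<inter> C = {}" using u(1) d(2) False by blast
            then show "e \<in> E1" "e \<in> E2" using dl eE by blast+
          qed
          have "C' = C" unfolding C'_def using False by simp
          then have "card D' div 2 - card C' = card D div 2 - 1 - card C" using div by simp
          then have h: "2 ^ (card D div 2 - 1 - card C) dvd card (Xs V' D' E1' E2')" using ih by simp
          have "(2::nat) * 2 ^ (card D div 2 - 1 - card C) dvd 2 * card (Xs V' D' E1' E2')"
            by (rule mult_dvd_mono[OF dvd_refl h])
          then have "2 ^ t dvd 2 * card (Xs V' D' E1' E2')"
            unfolding t_def by (rule dvd_trans[OF pow_aux])
          then show ?thesis using b1 b2 eboth by (simp add: mult_2[symmetric])
        qed
      qed
    qed
    show ?thesis unfolding decomp t_def[symmetric] by (rule dvd_sum) (use each in blast)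
  qed
qed



definition adj :: "nat \<times> nat \<Rightarrow> nat \<times> nat \<Rightarrow> bool" where
  "adj p q \<longleftrightarrow> (int (fst p) - int (fst q))^2 + (int (snd p) - int (snd q))^2 = 1"

lemma sqrt_adj: "sqrt ((real (fst p) - real (fst q))^2 + (real (snd p) - real (snd q))^2) = 1 \<longleftrightarrow> adj p q"
proof -
  have "(real (fst p) - real (fst q))^2 + (real (snd p) - real (snd q))^2
      = real_of_int ((int (fst p) - int (fst q))^2 + (int (snd p) - int (snd q))^2)" by simp
  then show ?thesis unfolding adj_def by (metis of_int_eq_1_iff real_sqrt_eq_1_iff)
qed

lemma grid_edges_iff: "e \<in> grid_edges n \<longleftrightarrow> (\<exists>p q. e = {p,q} \<and> p \<in> grid_vertices n \<and> q \<in> grid_vertices n \<and> adj p q)"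
  unfolding grid_edges_def using sqrt_adj by blast

lemma int_sq: "(x::int)^2 + y^2 = 1 \<Longrightarrow> (x = 0 \<and> (y = 1 \<or> y = -1)) \<or> (y = 0 \<and> (x = 1 \<or> x = -1))"
proof (cases "x = 0")
  case True
  assume "x^2 + y^2 = 1"
  then have "y^2 = 1" using True by simp
  then show ?thesis using True by (simp add: power2_eq_1_iff)
next
  case False
  assume h: "x^2 + y^2 = 1"
  have "x^2 > 0" using False by simp
  then have "x^2 \<ge> 1" by linarith
  moreover have "y^2 \<ge> 0" by simp
  ultimately have "y^2 = 0" "x^2 = 1" using h by linarith+
  then show ?thesis by (simp add: power2_eq_1_iff)
qed

lemma adj_cases: "adj p q \<Longrightarrow> (int (fst p) - int (fst q) = 0 \<and> (int (snd p) - int (snd q) = 1 \<or> int (snd p) - int (snd q) = -1))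
   \<or> (int (snd p) - int (snd q) = 0 \<and> (int (fst p) - int (fst q) = 1 \<or> int (fst p) - int (fst q) = -1))"
  unfolding adj_def by (rule int_sq)

lemma adj_neq: "adj p q \<Longrightarrow> p \<noteq> q"
  unfolding adj_def by auto

lemma adj_diag: "adj p q \<Longrightarrow> fst p = snd p \<Longrightarrow> fst q = snd q \<Longrightarrow> False"
  by (drule adj_cases) linarith

lemma adj_cross: "adj p q \<Longrightarrow> fst p < snd p \<Longrightarrow> fst q \<le> snd q"
  by (drule adj_cases) linarith

lemma adj_sym: "adj p q \<longleftrightarrow> adj q p"
  unfolding adj_def by (simp add: power2_commute)

lemma adj_swap: "adj (prod.swap p) (prod.swap q) \<longleftrightarrow> adj p q"
  unfolding adj_def by (simp add: add.commute)


definition ps :: "(nat \<times> nat) set \<Rightarrow> (nat \<times> nat) set" where "ps e = prod.swap ` e"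

lemma ps_ps[simp]: "ps (ps e) = e"
  unfolding ps_def by (simp add: image_image)
lemma mem_ps: "v \<in> ps e \<longleftrightarrow> prod.swap v \<in> e"
  unfolding ps_def by (metis image_iff swap_swap)
lemma ps_inj: "inj ps"
  by (metis injI ps_ps)
lemma ps_ps_img[simp]: "ps ` ps ` X = X"
  by (simp add: image_image)

lemma gv_swap: "p \<in> grid_vertices n \<Longrightarrow> prod.swap p \<in> grid_vertices n"
  unfolding grid_vertices_def by (cases p) auto

lemma ge_obtain:
  assumes "e \<in> grid_edges n"
  obtains p q where "e = {p,q}" "p \<in> grid_vertices n" "q \<in> grid_vertices n" "adj p q"
  using assms unfolding grid_edges_iff by blast

lemma ps_GE: "e \<in> grid_edges n \<Longrightarrow> ps e \<in> grid_edges n"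
proof -
  assume "e \<in> grid_edges n"
  then obtain p q where pq: "e = {p,q}" "p \<in> grid_vertices n" "q \<in> grid_vertices n" "adj p q"
    by (rule ge_obtain)
  have "ps e = {prod.swap p, prod.swap q}" unfolding pq(1) ps_def by simp
  moreover have "adj (prod.swap p) (prod.swap q)" using pq(4) adj_swap by blast
  ultimately show ?thesis unfolding grid_edges_iff using gv_swap pq(2,3) by blast
qed

definition Vup :: "nat \<Rightarrow> (nat \<times> nat) set" where "Vup n = {p \<in> grid_vertices n. fst p \<le> snd p}"
definition Vlo :: "nat \<Rightarrow> (nat \<times> nat) set" where "Vlo n = {p \<in> grid_vertices n. snd p \<le> fst p}"

lemma ge_split: "e \<in> grid_edges n \<Longrightarrow> e \<subseteq> Vup n \<or> e \<subseteq> Vlo n"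
proof -
  assume "e \<in> grid_edges n"
  then obtain p q where pq: "e = {p,q}" "p \<in> grid_vertices n" "q \<in> grid_vertices n" "adj p q"
    by (rule ge_obtain)
  have qp: "adj q p" using pq(4) adj_sym by blast
  have c1: "fst p < snd p \<Longrightarrow> fst q \<le> snd q" using adj_cross[OF pq(4)] .
  have c2: "fst q < snd q \<Longrightarrow> fst p \<le> snd p" using adj_cross[OF qp] .
  have c3: "snd p < fst p \<Longrightarrow> snd q \<le> fst q"
    using adj_cross[of "prod.swap p" "prod.swap q"] pq(4) adj_swap by (cases p, cases q) auto
  have c4: "snd q < fst q \<Longrightarrow> snd p \<le> fst p"
    using adj_cross[of "prod.swap q" "prod.swap p"] qp adj_swap by (cases p, cases q) auto
  have "(fst p \<le> snd p \<and> fst q \<le> snd q) \<or> (snd p \<le> fst p \<and> snd q \<le> fst q)"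
    using c1 c2 c3 c4 by linarith
  then show ?thesis unfolding pq(1) Vup_def Vlo_def using pq(2,3) by auto
qed

lemma ge_not_both: "e \<in> grid_edges n \<Longrightarrow> e \<subseteq> Vup n \<Longrightarrow> e \<subseteq> Vlo n \<Longrightarrow> False"
proof -
  assume a: "e \<in> grid_edges n" "e \<subseteq> Vup n" "e \<subseteq> Vlo n"
  from a(1) obtain p q where pq: "e = {p,q}" "p \<in> grid_vertices n" "q \<in> grid_vertices n" "adj p q"
    by (rule ge_obtain)
  have "fst p = snd p" "fst q = snd q" using a(2,3) unfolding pq(1) Vup_def Vlo_def by auto
  then show False using adj_diag[OF pq(4)] by blast
qed

lemma ps_Vlo: "e \<subseteq> Vlo n \<Longrightarrow> ps e \<subseteq> Vup n"
proof
  fix v assume a: "e \<subseteq> Vlo n" "v \<in> ps e"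
  then have "prod.swap v \<in> Vlo n" using mem_ps by blast
  then show "v \<in> Vup n" unfolding Vlo_def Vup_def using gv_swap[of "prod.swap v" n] by (cases v) simp
qed
lemma ps_Vup: "e \<subseteq> Vup n \<Longrightarrow> ps e \<subseteq> Vlo n"
proof
  fix v assume a: "e \<subseteq> Vup n" "v \<in> ps e"
  then have "prod.swap v \<in> Vup n" using mem_ps by blast
  then show "v \<in> Vlo n" unfolding Vlo_def Vup_def using gv_swap[of "prod.swap v" n] by (cases v) simp
qed

lemma cov1_ex1: "cov1 M v \<Longrightarrow> \<exists>e. e \<in> M \<and> v \<in> e \<and> (\<forall>f. f \<in> M \<and> v \<in> f \<longrightarrow> f = e)"
  unfolding cov1_def by (erule ex1E) blast

lemma cov1_ps: "cov1 (ps ` N) v \<longleftrightarrow> cov1 N (prod.swap v)"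
proof
  assume "cov1 (ps ` N) v"
  then obtain e where e: "e \<in> ps ` N" "v \<in> e" and u: "\<forall>f. f \<in> ps ` N \<and> v \<in> f \<longrightarrow> f = e"
    using cov1_ex1 by meson
  show "cov1 N (prod.swap v)" unfolding cov1_def
  proof (rule ex1I[of _ "ps e"])
    show "ps e \<in> N \<and> prod.swap v \<in> ps e" using e by (auto simp: mem_ps)
    fix f assume "f \<in> N \<and> prod.swap v \<in> f"
    then have "ps f \<in> ps ` N" "v \<in> ps f" by (auto simp: mem_ps)
    then have "ps f = e" using u by blast
    then show "f = ps e" by (metis ps_ps)
  qed
next
  assume "cov1 N (prod.swap v)"
  then obtain e where e: "e \<in> N" "prod.swap v \<in> e" and u: "\<forall>f. f \<in> N \<and> prod.swap v \<in> f \<longrightarrow> f = e"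
    using cov1_ex1 by meson
  show "cov1 (ps ` N) v" unfolding cov1_def
  proof (rule ex1I[of _ "ps e"])
    show "ps e \<in> ps ` N \<and> v \<in> ps e" using e by (auto simp: mem_ps)
    fix f assume f: "f \<in> ps ` N \<and> v \<in> f"
    then obtain g where g: "g \<in> N" "f = ps g" by blast
    then have "prod.swap v \<in> g" using f by (simp add: mem_ps)
    then have "g = e" using u g(1) by blast
    then show "f = ps e" using g(2) by simp
  qed
qed
lemma nocov_ps: "nocov (ps ` N) v \<longleftrightarrow> nocov N (prod.swap v)"
  unfolding nocov_def by (simp add: mem_ps)
lemma cov1_filter: "\<exists>!e. e \<in> M \<and> v \<in> e \<Longrightarrow> (\<And>e. e \<in> M \<Longrightarrow> v \<in> e \<Longrightarrow> P e) \<Longrightarrow> cov1 {e\<in>M. P e} v"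
  unfolding cov1_def by blast
lemma nocov_filter: "(\<And>e. e \<in> M \<Longrightarrow> v \<in> e \<Longrightarrow> \<not> P e) \<Longrightarrow> nocov {e\<in>M. P e} v"
  unfolding nocov_def by blast
lemma cov1_Un: "(cov1 A v \<and> nocov B v) \<or> (nocov A v \<and> cov1 B v) \<Longrightarrow> \<exists>!e. e \<in> A \<union> B \<and> v \<in> e"
  unfolding cov1_def nocov_def by blast



definition EG :: "nat \<Rightarrow> nat set \<Rightarrow> (nat \<times> nat) set set" where "EG n K = grid_edges n - step_edge ` K"
definition E1g :: "nat \<Rightarrow> (nat \<times> nat) set set" where "E1g n = {e \<in> grid_edges n. e \<subseteq> Vup n}"
definition E2g :: "nat \<Rightarrow> nat set \<Rightarrow> (nat \<times> nat) set set" where "E2g n K = ps ` {e \<in> EG n K. e \<subseteq> Vlo n}"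
definition Dg :: "nat \<Rightarrow> (nat \<times> nat) set" where "Dg n = {p \<in> grid_vertices n. fst p = snd p}"
definition fmap :: "nat \<Rightarrow> (nat \<times> nat) set set \<Rightarrow> (nat \<times> nat) set set \<times> (nat \<times> nat) set set" where
  "fmap n M = ({e \<in> M. e \<subseteq> Vup n}, ps ` {e \<in> M. e \<subseteq> Vlo n})"
definition gmap :: "(nat \<times> nat) set set \<times> (nat \<times> nat) set set \<Rightarrow> (nat \<times> nat) set set" where
  "gmap x = fst x \<union> ps ` snd x"

lemma E2g_props: "e \<in> E2g n K \<Longrightarrow> e \<in> grid_edges n \<and> e \<subseteq> Vup n \<and> ps e \<in> EG n K \<and> ps e \<subseteq> Vlo n"
proof -
  assume "e \<in> E2g n K"
  then obtain f where f: "f \<in> EG n K" "f \<subseteq> Vlo n" "e = ps f" unfolding E2g_def by blast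
  have "f \<in> grid_edges n" using f(1) unfolding EG_def by blast
  then show ?thesis using f ps_GE ps_Vlo by simp
qed

lemma E2g_sub: "E2g n K \<subseteq> E1g n"
  using E2g_props unfolding E1g_def by blast

lemma swap_in_Vup: "v \<in> grid_vertices n \<Longrightarrow> fst v < snd v \<Longrightarrow> prod.swap v \<notin> Vup n"
  unfolding Vup_def by (cases v) auto
lemma in_Vlo_lt: "fst v < snd v \<Longrightarrow> v \<notin> Vlo n"
  unfolding Vlo_def by auto
lemma in_Vup_gt: "snd v < fst v \<Longrightarrow> v \<notin> Vup n"
  unfolding Vup_def by auto

lemma f_in:
  assumes pm: "perfect_matching (grid_vertices n) (EG n K) M"
  shows "fmap n M \<in> Xs (Vup n) (Dg n) (E1g n) (E2g n K)"
proof -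
  have ME: "M \<subseteq> EG n K" and uq: "\<forall>v\<in>grid_vertices n. \<exists>!e. e \<in> M \<and> v \<in> e"
    using pm unfolding perfect_matching_def by blast+
  have MG: "\<And>e. e \<in> M \<Longrightarrow> e \<in> grid_edges n" using ME unfolding EG_def by blast
  have a: "{e \<in> M. e \<subseteq> Vup n} \<subseteq> E1g n" using MG unfolding E1g_def by blast
  have b: "ps ` {e \<in> M. e \<subseteq> Vlo n} \<subseteq> E2g n K" using ME unfolding E2g_def by blast
  have c: "\<forall>v\<in>Vup n - Dg n. cov1 {e \<in> M. e \<subseteq> Vup n} v \<and> cov1 (ps ` {e \<in> M. e \<subseteq> Vlo n}) v"
  proof
    fix v assume v: "v \<in> Vup n - Dg n"
    then have vW: "v \<in> grid_vertices n" and lt: "fst v < snd v" unfolding Vup_def Dg_def by auto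
    have sW: "prod.swap v \<in> grid_vertices n" using gv_swap[OF vW] .
    have "cov1 {e \<in> M. e \<subseteq> Vup n} v"
    proof (rule cov1_filter)
      show "\<exists>!e. e \<in> M \<and> v \<in> e" using uq vW by blast
      fix e assume "e \<in> M" "v \<in> e"
      then show "e \<subseteq> Vup n" using ge_split[OF MG] in_Vlo_lt[OF lt] by blast
    qed
    moreover have "cov1 {e \<in> M. e \<subseteq> Vlo n} (prod.swap v)"
    proof (rule cov1_filter)
      show "\<exists>!e. e \<in> M \<and> prod.swap v \<in> e" using uq sW by blast
      fix e assume "e \<in> M" "prod.swap v \<in> e"
      then show "e \<subseteq> Vlo n" using ge_split[OF MG] swap_in_Vup[OF vW lt] by blast
    qed
    ultimately show "cov1 {e \<in> M. e \<subseteq> Vup n} v \<and> cov1 (ps ` {e \<in> M. e \<subseteq> Vlo n}) v"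
      by (simp add: cov1_ps)
  qed
  have d: "\<forall>v\<in>Dg n. (cov1 {e \<in> M. e \<subseteq> Vup n} v \<and> nocov (ps ` {e \<in> M. e \<subseteq> Vlo n}) v)
      \<or> (nocov {e \<in> M. e \<subseteq> Vup n} v \<and> cov1 (ps ` {e \<in> M. e \<subseteq> Vlo n}) v)"
  proof
    fix v assume v: "v \<in> Dg n"
    then have vW: "v \<in> grid_vertices n" and eq: "fst v = snd v" unfolding Dg_def by auto
    have sv: "prod.swap v = v" using eq by (cases v) simp
    have ex: "\<exists>!e. e \<in> M \<and> v \<in> e" using uq vW by blast
    then obtain e0 where e0: "e0 \<in> M" "v \<in> e0" and u: "\<forall>f. f \<in> M \<and> v \<in> f \<longrightarrow> f = e0"
      using cov1_ex1[of M v] unfolding cov1_def by meson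
    have split: "e0 \<subseteq> Vup n \<or> e0 \<subseteq> Vlo n" using ge_split[OF MG[OF e0(1)]] .
    have nb: "\<not> (e0 \<subseteq> Vup n \<and> e0 \<subseteq> Vlo n)" using ge_not_both[OF MG[OF e0(1)]] by blast
    show "(cov1 {e \<in> M. e \<subseteq> Vup n} v \<and> nocov (ps ` {e \<in> M. e \<subseteq> Vlo n}) v)
      \<or> (nocov {e \<in> M. e \<subseteq> Vup n} v \<and> cov1 (ps ` {e \<in> M. e \<subseteq> Vlo n}) v)"
    proof (cases "e0 \<subseteq> Vup n")
      case True
      have "cov1 {e \<in> M. e \<subseteq> Vup n} v"
        by (rule cov1_filter[OF ex]) (use u True in blast)
      moreover have "nocov {e \<in> M. e \<subseteq> Vlo n} v"
        by (rule nocov_filter) (use u True nb in blast)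
      ultimately show ?thesis using sv by (simp add: nocov_ps)
    next
      case False
      then have lo: "e0 \<subseteq> Vlo n" using split by blast
      have "nocov {e \<in> M. e \<subseteq> Vup n} v"
        by (rule nocov_filter) (use u False in blast)
      moreover have "cov1 {e \<in> M. e \<subseteq> Vlo n} v"
        by (rule cov1_filter[OF ex]) (use u lo in blast)
      ultimately show ?thesis using sv by (simp add: cov1_ps)
    qed
  qed
  show ?thesis unfolding fmap_def Xs_iff using a b c d by blast
qed


lemma step_not_Vup: "step_edge j \<subseteq> Vup n \<Longrightarrow> False"
proof -
  assume "step_edge j \<subseteq> Vup n"
  moreover have "(j+1, j) \<in> step_edge j" unfolding step_edge_def by simp
  ultimately have "(j+1,j) \<in> Vup n" by blast
  then show False unfolding Vup_def by simp
qed

lemma g_in: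
  assumes X: "x \<in> Xs (Vup n) (Dg n) (E1g n) (E2g n K)"
  shows "perfect_matching (grid_vertices n) (EG n K) (gmap x)"
proof -
  obtain M1 M2 where x: "x = (M1, M2)" by (cases x)
  have XX: "(M1,M2) \<in> Xs (Vup n) (Dg n) (E1g n) (E2g n K)" using X x by simp
  have M1E: "M1 \<subseteq> E1g n" and M2E: "M2 \<subseteq> E2g n K"
    and nt: "\<forall>v\<in>Vup n - Dg n. cov1 M1 v \<and> cov1 M2 v"
    and tt: "\<forall>v\<in>Dg n. (cov1 M1 v \<and> nocov M2 v) \<or> (nocov M1 v \<and> cov1 M2 v)"
    using XX unfolding Xs_iff by blast+
  have M1up: "\<And>e. e \<in> M1 \<Longrightarrow> e \<subseteq> Vup n" using M1E unfolding E1g_def by blast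
  have M2up: "\<And>e. e \<in> M2 \<Longrightarrow> e \<subseteq> Vup n" using M2E E2g_props by blast
  have sub: "M1 \<union> ps ` M2 \<subseteq> EG n K"
  proof
    fix e assume "e \<in> M1 \<union> ps ` M2"
    then show "e \<in> EG n K"
    proof
      assume e: "e \<in> M1"
      then have "e \<in> grid_edges n" using M1E unfolding E1g_def by blast
      moreover have "e \<notin> step_edge ` K" using M1up[OF e] step_not_Vup by blast
      ultimately show ?thesis unfolding EG_def by blast
    next
      assume "e \<in> ps ` M2"
      then obtain f where f: "f \<in> M2" "e = ps f" by blast
      then show ?thesis using E2g_props M2E by blast
    qed
  qed
  have cov: "\<forall>v\<in>grid_vertices n. \<exists>!e. e \<in> M1 \<union> ps ` M2 \<and> v \<in> e"
  proof
    fix v assume vW: "v \<in> grid_vertices n"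
    have sW: "prod.swap v \<in> grid_vertices n" using gv_swap[OF vW] .
    have "(cov1 M1 v \<and> nocov (ps ` M2) v) \<or> (nocov M1 v \<and> cov1 (ps ` M2) v)"
    proof (cases "fst v < snd v")
      case True
      have "v \<in> Vup n - Dg n" using vW True unfolding Vup_def Dg_def by auto
      then have "cov1 M1 v" using nt by blast
      moreover have "nocov M2 (prod.swap v)"
        unfolding nocov_def using M2up swap_in_Vup[OF vW True] by blast
      ultimately show ?thesis by (simp add: nocov_ps)
    next
      case False
      show ?thesis
      proof (cases "fst v = snd v")
        case True
        have sv: "prod.swap v = v" using True by (cases v) simp
        have "v \<in> Dg n" using vW True unfolding Dg_def by auto
        then have "(cov1 M1 v \<and> nocov M2 v) \<or> (nocov M1 v \<and> cov1 M2 v)" using tt by blast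
        then show ?thesis using sv by (simp add: nocov_ps cov1_ps)
      next
        case F2: False
        then have gt: "snd v < fst v" using False by simp
        have "nocov M1 v" unfolding nocov_def using M1up in_Vup_gt[OF gt] by blast
        moreover have "prod.swap v \<in> Vup n - Dg n" using sW gt unfolding Vup_def Dg_def by (cases v) auto
        then have "cov1 M2 (prod.swap v)" using nt by blast
        ultimately show ?thesis by (simp add: cov1_ps)
      qed
    qed
    then show "\<exists>!e. e \<in> M1 \<union> ps ` M2 \<and> v \<in> e" by (rule cov1_Un)
  qed
  show ?thesis unfolding perfect_matching_def gmap_def x using sub cov by simp
qed

lemma gf: "M \<subseteq> grid_edges n \<Longrightarrow> gmap (fmap n M) = M"
proof -
  assume M: "M \<subseteq> grid_edges n"
  have "gmap (fmap n M) = {e \<in> M. e \<subseteq> Vup n} \<union> {e \<in> M. e \<subseteq> Vlo n}"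
    unfolding gmap_def fmap_def by simp
  also have "\<dots> = M" using M ge_split by blast
  finally show ?thesis .
qed

lemma fg: "x \<in> Xs (Vup n) (Dg n) (E1g n) (E2g n K) \<Longrightarrow> fmap n (gmap x) = x"
proof -
  assume X: "x \<in> Xs (Vup n) (Dg n) (E1g n) (E2g n K)"
  obtain M1 M2 where x: "x = (M1, M2)" by (cases x)
  have XX: "(M1,M2) \<in> Xs (Vup n) (Dg n) (E1g n) (E2g n K)" using X x by simp
  have M1E: "M1 \<subseteq> E1g n" and M2E: "M2 \<subseteq> E2g n K" using XX unfolding Xs_iff by blast+
  have h1: "{e \<in> M1 \<union> ps ` M2. e \<subseteq> Vup n} = M1"
  proof (intro equalityI subsetI)
    fix e assume e: "e \<in> {e \<in> M1 \<union> ps ` M2. e \<subseteq> Vup n}"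
    show "e \<in> M1"
    proof (rule ccontr)
      assume "e \<notin> M1"
      then obtain f where f: "f \<in> M2" "e = ps f" using e by blast
      then have "e \<in> grid_edges n" "e \<subseteq> Vlo n" using E2g_props M2E by (metis ps_GE ps_Vup subsetD)+
      then show False using e ge_not_both by blast
    qed
  next
    fix e assume "e \<in> M1" then show "e \<in> {e \<in> M1 \<union> ps ` M2. e \<subseteq> Vup n}" using M1E unfolding E1g_def by blast
  qed
  have h2: "{e \<in> M1 \<union> ps ` M2. e \<subseteq> Vlo n} = ps ` M2"
  proof (intro equalityI subsetI)
    fix e assume e: "e \<in> {e \<in> M1 \<union> ps ` M2. e \<subseteq> Vlo n}"
    show "e \<in> ps ` M2"
    proof (rule ccontr)
      assume "e \<notin> ps ` M2"
      then have "e \<in> M1" using e by blast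
      then have "e \<in> grid_edges n" "e \<subseteq> Vup n" using M1E unfolding E1g_def by blast+
      then show False using e ge_not_both by blast
    qed
  next
    fix e assume e: "e \<in> ps ` M2"
    then obtain f where f: "f \<in> M2" "e = ps f" by blast
    then have "e \<subseteq> Vlo n" using E2g_props M2E by (metis ps_Vup subsetD)
    then show "e \<in> {e \<in> M1 \<union> ps ` M2. e \<subseteq> Vlo n}" using e by blast
  qed
  show ?thesis unfolding fmap_def gmap_def x using h1 h2 by simp
qed

lemma card_eq: "card {M. perfect_matching (grid_vertices n) (EG n K) M} = card (Xs (Vup n) (Dg n) (E1g n) (E2g n K))"
proof (rule bij_betw_same_card[of "fmap n"], rule bij_betw_byWitness[where f'=gmap])
  show "\<forall>a\<in>{M. perfect_matching (grid_vertices n) (EG n K) M}. gmap (fmap n a) = a"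
  proof
    fix M assume "M \<in> {M. perfect_matching (grid_vertices n) (EG n K) M}"
    then have "M \<subseteq> grid_edges n" unfolding perfect_matching_def EG_def by blast
    then show "gmap (fmap n M) = M" by (rule gf)
  qed
  show "\<forall>a'\<in>Xs (Vup n) (Dg n) (E1g n) (E2g n K). fmap n (gmap a') = a'" using fg by blast
  show "fmap n ` {M. perfect_matching (grid_vertices n) (EG n K) M} \<subseteq> Xs (Vup n) (Dg n) (E1g n) (E2g n K)"
    using f_in by blast
  show "gmap ` Xs (Vup n) (Dg n) (E1g n) (E2g n K) \<subseteq> {M. perfect_matching (grid_vertices n) (EG n K) M}"
    using g_in by blast
qed


theorem proposition3p7:
  fixes r :: nat and K :: "nat set"
  assumes "r \<ge> 1" and "K \<subseteq> {0..<r}"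
  shows "2 ^ (r - card K) dvd
    num_perfect_matchings (grid_vertices (2 * r)) (grid_edges (2 * r) - step_edge ` K)"
proof -
  define n where "n = 2 * r"
  define C where "C = (\<lambda>j. (j,j)) ` K"
  have finK: "finite K" using assms(2) finite_subset by blast
  have finW: "finite (grid_vertices n)" unfolding grid_vertices_def by simp
  have finV: "finite (Vup n)" using finW unfolding Vup_def by simp
  have DV: "Dg n \<subseteq> Vup n" unfolding Dg_def Vup_def by auto
  have wf: "wfe (Vup n) (E1g n \<union> E2g n K)" unfolding wfe_def
  proof
    fix e assume "e \<in> E1g n \<union> E2g n K"
    then have e: "e \<in> E1g n" using E2g_sub by blast
    then have eg: "e \<in> grid_edges n" and eu: "e \<subseteq> Vup n" unfolding E1g_def by blast+
    from eg obtain p q where pq: "e = {p,q}" "p \<in> grid_vertices n" "q \<in> grid_vertices n" "adj p q"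
      by (rule ge_obtain)
    have "p \<in> Vup n" "q \<in> Vup n" using eu pq(1) by auto
    then show "\<exists>x y. e = {x, y} \<and> x \<noteq> y \<and> x \<in> Vup n \<and> y \<in> Vup n" using pq(1) adj_neq[OF pq(4)] by blast
  qed
  have CD: "C \<subseteq> Dg n" unfolding C_def Dg_def grid_vertices_def n_def using assms(2) by auto
  have dl: "\<forall>e \<in> (E1g n - E2g n K) \<union> (E2g n K - E1g n). e \<inter> C \<noteq> {}"
  proof
    fix e assume "e \<in> (E1g n - E2g n K) \<union> (E2g n K - E1g n)"
    then have e1: "e \<in> E1g n" and e2: "e \<notin> E2g n K" using E2g_sub by blast+
    have eg: "e \<in> grid_edges n" and eu: "e \<subseteq> Vup n" using e1 unfolding E1g_def by blast+
    have pg: "ps e \<in> grid_edges n" using ps_GE[OF eg] .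
    have pl: "ps e \<subseteq> Vlo n" using ps_Vup[OF eu] .
    have "ps e \<in> step_edge ` K"
    proof (rule ccontr)
      assume "ps e \<notin> step_edge ` K"
      then have "ps e \<in> {f \<in> EG n K. f \<subseteq> Vlo n}" using pg pl unfolding EG_def by blast
      then have "ps (ps e) \<in> E2g n K" unfolding E2g_def by blast
      then show False using e2 by simp
    qed
    then obtain j where j: "j \<in> K" "ps e = step_edge j" by blast
    have "(j,j) \<in> ps e" using j(2) unfolding step_edge_def by simp
    then have "(j,j) \<in> e" using mem_ps by fastforce
    moreover have "(j,j) \<in> C" using j(1) unfolding C_def by blast
    ultimately show "e \<inter> C \<noteq> {}" by blast
  qed
  have main: "2 ^ (card (Dg n) div 2 - card C) dvd card (Xs (Vup n) (Dg n) (E1g n) (E2g n K))"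
    by (rule main_abs[OF finV DV wf CD dl])
  have "Dg n = (\<lambda>a. (a,a)) ` {0..<n}" unfolding Dg_def grid_vertices_def by auto
  then have cD: "card (Dg n) = 2 * r" unfolding n_def by (simp add: card_image inj_on_def)
  have cC: "card C = card K" unfolding C_def by (simp add: card_image inj_on_def)
  have "num_perfect_matchings (grid_vertices (2 * r)) (grid_edges (2 * r) - step_edge ` K)
      = card {M. perfect_matching (grid_vertices n) (EG n K) M}"
    unfolding num_perfect_matchings_def EG_def n_def ..
  also have "\<dots> = card (Xs (Vup n) (Dg n) (E1g n) (E2g n K))" by (rule card_eq)
  finally show ?thesis using main cD cC by simp
qed

end
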